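(* In the theory $\mathrm{TP}$ the following hold. (1) For every $\mathcal L$-sentence $\varphi$ and all finite sets of sentences $\Gamma,\Delta$: if $\mathrm{TP}\vdash\Gamma\Rightarrow\Delta,\mathrm P\ulcorner\varphi\urcorner$, then $\mathrm{TP}\vdash\mathrm T\ulcorner\varphi\vee\neg\varphi\urcorner,\Gamma\Rightarrow\Delta$. (2) $\mathrm{TP}$ derives the sequents $\mathrm Pt\Rightarrow\neg\mathrm P\mathrm Pt$ and $\neg\mathrm Pt\Rightarrow\neg\mathrm P\neg\mathrm Pt$, where $\mathrm P\mathrm Pt$ denotes $\mathrm P$ applied to the code of the sentence $\mathrm P\bar n$ with $n$ the value of $t$ (and likewise $\mathrm P\neg\mathrm Pt$).
   Context: Language. Let $\mathcal L_{\mathbb N}$ be the language of first-order Peano arithmetic and $\mathcal L=\mathcal L_{\mathbb N}\cup\{\mathrm T,\mathrm P\}$ with unary predicates $\mathrm T,\mathrm P$. $\mathcal L$-formulas are in Tait style: literals are $s=t$, $s\neq t$, $\mathrm Tt$, $\neg\mathrm Tt$, $\mathrm Pt$, $\neg\mathrm Pt$; formulas are built from literals by $\wedge,\vee,\forall,\exists$; negation of an arbitrary formula is defined by De Morgan dualities with $\neg\neg\varphi:=\varphi$. A standard Gödel numbering is fixed; $\ulcorner e\urcorner$ is the numeral of the code of $e$, $\dot\neg$ is the primitive recursive function sending the code of $\varphi$ to the code of $\neg\varphi$, and $\mathrm{val}(t)$ is the value of a closed term. $\Gamma\Leftrightarrow\Delta$ abbreviates the two sequents $\Gamma\Rightarrow\Delta$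 and $\Delta\Rightarrow\Gamma$. Base system. $\mathrm{PA}[\mathrm{SK}]$ is the two-sided sequent calculus for Strong Kleene logic with identity in $\mathcal L$ (initial sequents $\varphi\Rightarrow\varphi$; cut; weakening on both sides; the rule from $\Gamma\Rightarrow\Delta,\varphi$ infer $\neg\varphi,\Gamma\Rightarrow\Delta$; the usual left and right rules for $\wedge,\vee,\forall,\exists$; reflexivity $\Gamma\Rightarrow\Delta,t=t$; replacement from $\Gamma\Rightarrow\Delta,\varphi(t)$ infer $\Gamma\Rightarrow\Delta,s\neq t,\varphi(s)$), expanded by the initial sequents of Peano arithmetic and the induction rule for every $\mathcal L$-formula. A sentence is base paradoxical iff $\mathrm{PA}[\mathrm{SK}]$ derives $\varphi\Leftrightarrow\neg\mathrm T\ulcorner\varphi\urcorner$ and $\neg\varphi\Leftrightarrow\mathrm T\ulcorner\varphi\urcorner$; $B(x)$ is an $\mathcal L_{\mathbb N}$-formula defining in $\mathbb N$ the set of codes of base paradoxical sentences, and $\Pi(x):=B(x)\vee B(\dot\neg x)$. The theory TP expands $\mathrm{PA}[\mathrm{SK}]$ by the following initial sequents. In them $\varphi,\psi$ are variables ranging over codes of $\mathcal L$-sentences (in quantifier principles, $\varphi(x)$ denotes the code of the numeral instance at $x$ of a formula code with one free variable), $s,t$ range over codes of closed terms; each principle stands for the sequents with these free variables and the syntactic side conditions as antecedent hypotheses; expressions inside $\mathrm T(\cdot)$, $\mathrm P(\cdot)$ denote codes formed by the corresponding primitive recursive syntactic operations (e.g. $\mathrm T\mathrm P\varphi$ is $\mathrm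 T$ applied to the code of the sentence $\mathrm P\bar n$, $n$ the value of $\varphi$; $\neg\varphi$ inside a code is $\dot\neg\varphi$); $A$ ranges over $\{\mathrm T,\mathrm P\}$. (T1) $\mathrm{val}(s)=\mathrm{val}(t)\Leftrightarrow\mathrm T(s\dot=t)$, $\mathrm{val}(s)\neq\mathrm{val}(t)\Leftrightarrow\mathrm T(s\dot\neq t)$; (T2) $\mathrm P\varphi\Leftrightarrow\mathrm T\mathrm P\varphi$, $\neg\mathrm P\varphi\Leftrightarrow\mathrm T\neg\mathrm P\varphi$; (T3) $\mathrm T\varphi\Leftrightarrow\mathrm T\mathrm T\varphi$, $\mathrm T\neg\varphi\Leftrightarrow\neg\mathrm T\varphi$; (T4) $\mathrm T\varphi\wedge\mathrm T\psi\Leftrightarrow\mathrm T(\varphi\wedge\psi)$, $\mathrm T\varphi\vee\mathrm T\psi\Leftrightarrow\mathrm T(\varphi\vee\psi)$; (T5) $\forall x\mathrm T\varphi(x)\Leftrightarrow\mathrm T\forall x\varphi(x)$, $\exists x\mathrm T\varphi(x)\Leftrightarrow\mathrm T\exists x\varphi(x)$; (P1) $\Pi(\varphi)\Rightarrow\mathrm P\varphi$; (P2) $\mathrm P\neg A\varphi\Leftrightarrow\mathrm PA\varphi$; (P3) $\mathrm P\mathrm T\varphi\Leftrightarrow\mathrm P\varphi\vee\Pi(\mathrm T\varphi)$; (P4) $\mathrm P(\varphi\wedge\psi)\Leftrightarrow(\mathrm P\varphi\wedge\mathrm P\psi)\vee(\mathrm T\varphi\wedge\mathrm P\psi)\vee(\mathrm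 T\psi\wedge\mathrm P\varphi)\vee\Pi(\varphi\wedge\psi)$; (P5) $\mathrm P(\varphi\vee\psi)\Leftrightarrow(\mathrm P\varphi\wedge\mathrm P\psi)\vee(\neg\mathrm T\varphi\wedge\mathrm P\psi)\vee(\neg\mathrm T\psi\wedge\mathrm P\varphi)\vee\Pi(\varphi\vee\psi)$; (P6) $\mathrm P\forall x\varphi(x)\Leftrightarrow(\exists x\mathrm P\varphi(x)\wedge\forall y(\mathrm P\varphi(y)\vee\mathrm T\varphi(y)))\vee\Pi(\forall x\varphi(x))$; (P7) $\mathrm P\exists x\varphi(x)\Leftrightarrow(\exists x\mathrm P\varphi(x)\wedge\forall y(\mathrm P\varphi(y)\vee\neg\mathrm T\varphi(y)))\vee\Pi(\exists x\varphi(x))$; (I1) $\mathrm T(\varphi\vee\neg\varphi)\Rightarrow\neg\mathrm P\varphi$. *)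

theory Defs
  imports Main "HOL-Library.Nat_Bijection"
begin

section \<open>Syntax of the language L = L_N + {T, P}\<close>

text \<open>Function symbols of L_N: codes of primitive recursive functions
  (zero, successor, projections, composition, primitive recursion).
  0, S, +, x are particular such symbols.\<close>
datatype pfun = PZ | PS | PProj nat | PComp pfun "pfun list" | PRec pfun pfun

datatype trm = V nat | Fn pfun "trm list"

text \<open>Tait-style formulas: literals and \<and>, \<or>, \<forall>, \<exists>.\<close>
datatype fml =
    FEq trm trm | FNeq trm trm | FT trm | FNT trm | FP trm | FNP trm
  | FAnd fml fml | FOr fml fml | FAll nat fml | FEx nat fml

fun neg :: "fml \<Rightarrow> fml" where
  "neg (FEq s t) = FNeq s t"
| "neg (FNeq s t) = FEq s t"
| "neg (FT t) = FNT t"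
| "neg (FNT t) = FT t"
| "neg (FP t) = FNP t"
| "neg (FNP t) = FP t"
| "neg (FAnd a b) = FOr (neg a) (neg b)"
| "neg (FOr a b) = FAnd (neg a) (neg b)"
| "neg (FAll x a) = FEx x (neg a)"
| "neg (FEx x a) = FAll x (neg a)"

fun fvt :: "trm \<Rightarrow> nat set" where
  "fvt (V n) = {n}"
| "fvt (Fn f ts) = (\<Union>t\<in>set ts. fvt t)"

fun fv :: "fml \<Rightarrow> nat set" where
  "fv (FEq s t) = fvt s \<union> fvt t"
| "fv (FNeq s t) = fvt s \<union> fvt t"
| "fv (FT t) = fvt t"
| "fv (FNT t) = fvt t"
| "fv (FP t) = fvt t"
| "fv (FNP t) = fvt t"
| "fv (FAnd a b) = fv a \<union> fv b"
| "fv (FOr a b) = fv a \<union> fv b"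
| "fv (FAll x a) = fv a - {x}"
| "fv (FEx x a) = fv a - {x}"

definition fvs :: "fml set \<Rightarrow> nat set" where
  "fvs G = (\<Union>a\<in>G. fv a)"

definition sentence :: "fml \<Rightarrow> bool" where
  "sentence a \<longleftrightarrow> fv a = {}"

definition fresh :: "nat set \<Rightarrow> nat" where
  "fresh S = (LEAST n. n \<notin> S)"

fun substt :: "(nat \<Rightarrow> trm) \<Rightarrow> trm \<Rightarrow> trm" where
  "substt \<sigma> (V n) = \<sigma> n"
| "substt \<sigma> (Fn f ts) = Fn f (map (substt \<sigma>) ts)"

text \<open>Capture-avoiding simultaneous substitution (bound variables are renamed
  only when capture would occur).\<close>
fun substf :: "(nat \<Rightarrow> trm) \<Rightarrow> fml \<Rightarrow> fml" where
  "substf \<sigma> (FEq s t) = FEq (substt \<sigma> s) (substt \<sigma> t)"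
| "substf \<sigma> (FNeq s t) = FNeq (substt \<sigma> s) (substt \<sigma> t)"
| "substf \<sigma> (FT t) = FT (substt \<sigma> t)"
| "substf \<sigma> (FNT t) = FNT (substt \<sigma> t)"
| "substf \<sigma> (FP t) = FP (substt \<sigma> t)"
| "substf \<sigma> (FNP t) = FNP (substt \<sigma> t)"
| "substf \<sigma> (FAnd a b) = FAnd (substf \<sigma> a) (substf \<sigma> b)"
| "substf \<sigma> (FOr a b) = FOr (substf \<sigma> a) (substf \<sigma> b)"
| "substf \<sigma> (FAll x a) =
     (let W = (\<Union>y\<in>fv (FAll x a). fvt (\<sigma> y));
          z = (if x \<in> W then fresh (W \<union> fv a) else x)
      in FAll z (substf (\<sigma>(x := V z)) a))"
| "substf \<sigma> (FEx x a) =
     (let W = (\<Union>y\<in>fv (FEx x a). fvt (\<sigma> y));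
          z = (if x \<in> W then fresh (W \<union> fv a) else x)
      in FEx z (substf (\<sigma>(x := V z)) a))"

definition inst1 :: "nat \<Rightarrow> trm \<Rightarrow> fml \<Rightarrow> fml" where
  "inst1 x t a = substf (V(x := t)) a"

definition zero :: trm where "zero = Fn PZ []"
definition succ :: "trm \<Rightarrow> trm" where "succ t = Fn PS [t]"

primrec num :: "nat \<Rightarrow> trm" where
  "num 0 = zero"
| "num (Suc n) = succ (num n)"

section \<open>Standard semantics\<close>

fun eval_pfun :: "pfun \<Rightarrow> nat list \<Rightarrow> nat" where
  "eval_pfun PZ xs = 0"
| "eval_pfun PS xs = Suc (case xs of [] \<Rightarrow> 0 | x # _ \<Rightarrow> x)"
| "eval_pfun (PProj i) xs = (if i < length xs then xs ! i else 0)"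
| "eval_pfun (PComp f gs) xs = eval_pfun f (map (\<lambda>g. eval_pfun g xs) gs)"
| "eval_pfun (PRec f g) xs = (case xs of [] \<Rightarrow> eval_pfun f []
     | y # ys \<Rightarrow> rec_nat (eval_pfun f ys) (\<lambda>k r. eval_pfun g (r # k # ys)) y)"

fun evalt :: "(nat \<Rightarrow> nat) \<Rightarrow> trm \<Rightarrow> nat" where
  "evalt e (V n) = e n"
| "evalt e (Fn f ts) = eval_pfun f (map (evalt e) ts)"

fun sat :: "nat set \<Rightarrow> nat set \<Rightarrow> (nat \<Rightarrow> nat) \<Rightarrow> fml \<Rightarrow> bool" where
  "sat T P e (FEq s t) = (evalt e s = evalt e t)"
| "sat T P e (FNeq s t) = (evalt e s \<noteq> evalt e t)"
| "sat T P e (FT t) = (evalt e t \<in> T)"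
| "sat T P e (FNT t) = (evalt e t \<notin> T)"
| "sat T P e (FP t) = (evalt e t \<in> P)"
| "sat T P e (FNP t) = (evalt e t \<notin> P)"
| "sat T P e (FAnd a b) = (sat T P e a \<and> sat T P e b)"
| "sat T P e (FOr a b) = (sat T P e a \<or> sat T P e b)"
| "sat T P e (FAll x a) = (\<forall>n. sat T P (e(x := n)) a)"
| "sat T P e (FEx x a) = (\<exists>n. sat T P (e(x := n)) a)"

fun is_LN :: "fml \<Rightarrow> bool" where
  "is_LN (FEq s t) = True"
| "is_LN (FNeq s t) = True"
| "is_LN (FT t) = False"
| "is_LN (FNT t) = False"
| "is_LN (FP t) = False"
| "is_LN (FNP t) = False"
| "is_LN (FAnd a b) = (is_LN a \<and> is_LN b)"
| "is_LN (FOr a b) = (is_LN a \<and> is_LN b)"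
| "is_LN (FAll x a) = is_LN a"
| "is_LN (FEx x a) = is_LN a"

section \<open>A standard Goedel numbering\<close>

fun code_pfun :: "pfun \<Rightarrow> nat" where
  "code_pfun PZ = prod_encode (0, 0)"
| "code_pfun PS = prod_encode (1, 0)"
| "code_pfun (PProj i) = prod_encode (2, i)"
| "code_pfun (PComp f gs) = prod_encode (3, prod_encode (code_pfun f, list_encode (map code_pfun gs)))"
| "code_pfun (PRec f g) = prod_encode (4, prod_encode (code_pfun f, code_pfun g))"

fun code_trm :: "trm \<Rightarrow> nat" where
  "code_trm (V n) = prod_encode (0, n)"
| "code_trm (Fn f ts) = prod_encode (1, prod_encode (code_pfun f, list_encode (map code_trm ts)))"

fun code_fml :: "fml \<Rightarrow> nat" where
  "code_fml (FEq s t) = prod_encode (0, prod_encode (code_trm s, code_trm t))"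
| "code_fml (FNeq s t) = prod_encode (1, prod_encode (code_trm s, code_trm t))"
| "code_fml (FT t) = prod_encode (2, code_trm t)"
| "code_fml (FNT t) = prod_encode (3, code_trm t)"
| "code_fml (FP t) = prod_encode (4, code_trm t)"
| "code_fml (FNP t) = prod_encode (5, code_trm t)"
| "code_fml (FAnd a b) = prod_encode (6, prod_encode (code_fml a, code_fml b))"
| "code_fml (FOr a b) = prod_encode (7, prod_encode (code_fml a, code_fml b))"
| "code_fml (FAll x a) = prod_encode (8, prod_encode (x, code_fml a))"
| "code_fml (FEx x a) = prod_encode (9, prod_encode (x, code_fml a))"

definition quote :: "fml \<Rightarrow> trm" where
  "quote a = num (code_fml a)"

definition is_fcode :: "nat \<Rightarrow> bool" where "is_fcode n \<longleftrightarrow> n \<in> range code_fml"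
definition is_tcode :: "nat \<Rightarrow> bool" where "is_tcode n \<longleftrightarrow> n \<in> range code_trm"
definition dec_f :: "nat \<Rightarrow> fml" where "dec_f n = inv code_fml n"
definition dec_t :: "nat \<Rightarrow> trm" where "dec_t n = inv code_trm n"

definition one_free :: "nat \<Rightarrow> bool" where
  "one_free n \<longleftrightarrow> is_fcode n \<and> (\<exists>v. fv (dec_f n) = {v})"

section \<open>The syntactic operations on codes (as functions on \<nat>)\<close>

definition negF :: "nat \<Rightarrow> nat" where
  "negF n = (if is_fcode n then code_fml (neg (dec_f n)) else 0)"
definition conjF :: "nat \<Rightarrow> nat \<Rightarrow> nat" where
  "conjF m n = (if is_fcode m \<and> is_fcode n then code_fml (FAnd (dec_f m) (dec_f n)) else 0)"
definition disjF :: "nat \<Rightarrow> nat \<Rightarrow> nat" where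
  "disjF m n = (if is_fcode m \<and> is_fcode n then code_fml (FOr (dec_f m) (dec_f n)) else 0)"
definition eqF :: "nat \<Rightarrow> nat \<Rightarrow> nat" where
  "eqF m n = (if is_tcode m \<and> is_tcode n then code_fml (FEq (dec_t m) (dec_t n)) else 0)"
definition neqF :: "nat \<Rightarrow> nat \<Rightarrow> nat" where
  "neqF m n = (if is_tcode m \<and> is_tcode n then code_fml (FNeq (dec_t m) (dec_t n)) else 0)"
definition TF :: "nat \<Rightarrow> nat" where "TF n = code_fml (FT (num n))"
definition PF :: "nat \<Rightarrow> nat" where "PF n = code_fml (FP (num n))"
definition allF :: "nat \<Rightarrow> nat" where
  "allF n = (if one_free n then code_fml (FAll (the_elem (fv (dec_f n))) (dec_f n)) else 0)"
definition exF :: "nat \<Rightarrow> nat" where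
  "exF n = (if one_free n then code_fml (FEx (the_elem (fv (dec_f n))) (dec_f n)) else 0)"
definition instF :: "nat \<Rightarrow> nat \<Rightarrow> nat" where
  "instF n m = (if one_free n then code_fml (inst1 (the_elem (fv (dec_f n))) (num m) (dec_f n)) else 0)"
definition sentF :: "nat \<Rightarrow> nat" where
  "sentF n = (if is_fcode n \<and> sentence (dec_f n) then 1 else 0)"
definition fml1F :: "nat \<Rightarrow> nat" where
  "fml1F n = (if one_free n then 1 else 0)"
definition cltermF :: "nat \<Rightarrow> nat" where
  "cltermF n = (if is_tcode n \<and> fvt (dec_t n) = {} then 1 else 0)"

text \<open>The function symbols of L_N used to express the syntactic operations.
  Any choice of primitive recursive function symbols computing the intended
  operations is admitted.\<close>
record coding =
  c_neg :: pfun  c_conj :: pfun  c_disj :: pfun  c_eq :: pfun  c_neq :: pfun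
  c_T :: pfun  c_P :: pfun  c_all :: pfun  c_ex :: pfun  c_inst :: pfun
  c_sent :: pfun  c_fml1 :: pfun  c_clterm :: pfun

definition good_coding :: "coding \<Rightarrow> bool" where
  "good_coding C \<longleftrightarrow>
     (\<forall>n. eval_pfun (c_neg C) [n] = negF n) \<and>
     (\<forall>m n. eval_pfun (c_conj C) [m, n] = conjF m n) \<and>
     (\<forall>m n. eval_pfun (c_disj C) [m, n] = disjF m n) \<and>
     (\<forall>m n. eval_pfun (c_eq C) [m, n] = eqF m n) \<and>
     (\<forall>m n. eval_pfun (c_neq C) [m, n] = neqF m n) \<and>
     (\<forall>n. eval_pfun (c_T C) [n] = TF n) \<and>
     (\<forall>n. eval_pfun (c_P C) [n] = PF n) \<and>
     (\<forall>n. eval_pfun (c_all C) [n] = allF n) \<and>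
     (\<forall>n. eval_pfun (c_ex C) [n] = exF n) \<and>
     (\<forall>m n. eval_pfun (c_inst C) [m, n] = instF m n) \<and>
     (\<forall>n. eval_pfun (c_sent C) [n] = sentF n) \<and>
     (\<forall>n. eval_pfun (c_fml1 C) [n] = fml1F n) \<and>
     (\<forall>n. eval_pfun (c_clterm C) [n] = cltermF n)"

section \<open>The sequent calculus (Strong Kleene, with identity and induction)\<close>

text \<open>Sequents are pairs of finite sets of formulas; \<open>Ax\<close> is a set of extra
  initial sequents.\<close>
inductive deriv :: "(fml set \<times> fml set) set \<Rightarrow> fml set \<Rightarrow> fml set \<Rightarrow> bool"
  for Ax :: "(fml set \<times> fml set) set" where
  ax: "(G, D) \<in> Ax \<Longrightarrow> finite G \<Longrightarrow> finite D \<Longrightarrow> deriv Ax G D"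
| init: "deriv Ax {a} {a}"
| weak: "deriv Ax G D \<Longrightarrow> G \<subseteq> G' \<Longrightarrow> D \<subseteq> D' \<Longrightarrow> finite G' \<Longrightarrow> finite D'
          \<Longrightarrow> deriv Ax G' D'"
| cut: "deriv Ax G (insert a D) \<Longrightarrow> deriv Ax (insert a G) D \<Longrightarrow> deriv Ax G D"
| negL: "deriv Ax G (insert a D) \<Longrightarrow> deriv Ax (insert (neg a) G) D"
| andL1: "deriv Ax (insert a G) D \<Longrightarrow> deriv Ax (insert (FAnd a b) G) D"
| andL2: "deriv Ax (insert b G) D \<Longrightarrow> deriv Ax (insert (FAnd a b) G) D"
| andR: "deriv Ax G (insert a D) \<Longrightarrow> deriv Ax G (insert b D)
          \<Longrightarrow> deriv Ax G (insert (FAnd a b) D)"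
| orL: "deriv Ax (insert a G) D \<Longrightarrow> deriv Ax (insert b G) D
          \<Longrightarrow> deriv Ax (insert (FOr a b) G) D"
| orR1: "deriv Ax G (insert a D) \<Longrightarrow> deriv Ax G (insert (FOr a b) D)"
| orR2: "deriv Ax G (insert b D) \<Longrightarrow> deriv Ax G (insert (FOr a b) D)"
| allL: "deriv Ax (insert (inst1 x t a) G) D \<Longrightarrow> deriv Ax (insert (FAll x a) G) D"
| allR: "deriv Ax G (insert (inst1 x (V y) a) D) \<Longrightarrow> y \<notin> fvs G \<union> fvs D \<union> fv (FAll x a)
          \<Longrightarrow> deriv Ax G (insert (FAll x a) D)"
| exL: "deriv Ax (insert (inst1 x (V y) a) G) D \<Longrightarrow> y \<notin> fvs G \<union> fvs D \<union> fv (FEx x a)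
          \<Longrightarrow> deriv Ax (insert (FEx x a) G) D"
| exR: "deriv Ax G (insert (inst1 x t a) D) \<Longrightarrow> deriv Ax G (insert (FEx x a) D)"
| refl: "finite G \<Longrightarrow> finite D \<Longrightarrow> deriv Ax G (insert (FEq t t) D)"
| repl: "deriv Ax G (insert (inst1 x t a) D)
          \<Longrightarrow> deriv Ax G (insert (FNeq s t) (insert (inst1 x s a) D))"
| ind: "deriv Ax G (insert (inst1 x zero a) D)
        \<Longrightarrow> deriv Ax (insert (inst1 x (V y) a) G) (insert (inst1 x (succ (V y)) a) D)
        \<Longrightarrow> y \<notin> fvs G \<union> fvs D \<union> fv (FAll x a)
        \<Longrightarrow> deriv Ax G (insert (inst1 x t a) D)"

text \<open>Initial sequents of Peano arithmetic: successor axioms and the defining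
  equations of the primitive recursive function symbols (all instances).\<close>
definition PAax :: "(fml set \<times> fml set) set" where
  "PAax =
     {({}, {FEq (Fn PZ ts) zero}) | ts. True}
   \<union> {({}, {FEq (Fn PS (t # u # ts)) (succ t)}) | t u ts. True}
   \<union> {({}, {FEq (Fn PS []) (succ zero)})}
   \<union> {({FEq (succ t) zero}, {}) | t. True}
   \<union> {({FEq (succ s) (succ t)}, {FEq s t}) | s t. True}
   \<union> {({}, {FEq (Fn (PProj i) ts) (if i < length ts then ts ! i else zero)}) | i ts. True}
   \<union> {({}, {FEq (Fn (PComp f gs) ts) (Fn f (map (\<lambda>g. Fn g ts) gs))}) | f gs ts. True}
   \<union> {({}, {FEq (Fn (PRec f g) []) (Fn f [])}) | f g. True}
   \<union> {({}, {FEq (Fn (PRec f g) (zero # ts)) (Fn f ts)}) | f g ts. True}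
   \<union> {({}, {FEq (Fn (PRec f g) (succ t # ts)) (Fn g (Fn (PRec f g) (t # ts) # t # ts))})
       | f g t ts. True}"

abbreviation PASK :: "fml set \<Rightarrow> fml set \<Rightarrow> bool" where
  "PASK \<equiv> deriv PAax"

section \<open>Base paradoxicality\<close>

definition base_paradoxical :: "fml \<Rightarrow> bool" where
  "base_paradoxical a \<longleftrightarrow> sentence a \<and>
     PASK {a} {FNT (quote a)} \<and> PASK {FNT (quote a)} {a} \<and>
     PASK {neg a} {FT (quote a)} \<and> PASK {FT (quote a)} {neg a}"

definition defines_BP :: "fml \<Rightarrow> bool" where
  "defines_BP B \<longleftrightarrow> is_LN B \<and> fv B \<subseteq> {0} \<and>
     (\<forall>n. sat {} {} (\<lambda>_. n) B \<longleftrightarrow> n \<in> code_fml ` {a. base_paradoxical a})"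

definition defines_val :: "fml \<Rightarrow> bool" where
  "defines_val Vl \<longleftrightarrow> is_LN Vl \<and> fv Vl \<subseteq> {0, 1} \<and>
     (\<forall>n m. sat {} {} ((\<lambda>_. 0)(0 := n, 1 := m)) Vl \<longleftrightarrow>
        (is_tcode n \<and> fvt (dec_t n) = {} \<and> m = evalt (\<lambda>_. 0) (dec_t n)))"

section \<open>The theory TP\<close>

definition iffs :: "fml set \<Rightarrow> fml \<Rightarrow> fml \<Rightarrow> (fml set \<times> fml set) set" where
  "iffs H a b = {(insert a H, {b}), (insert b H, {a})}"

text \<open>The instances of the principles of TP for terms a (= \<phi> or s), b (= \<psi> or t)
  and bound variables z, w not occurring in a, b.\<close>
definition tp_inst :: "coding \<Rightarrow> fml \<Rightarrow> fml \<Rightarrow> trm \<Rightarrow> trm \<Rightarrow> nat \<Rightarrow> nat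
     \<Rightarrow> (fml set \<times> fml set) set" where
  "tp_inst C Vl B a b z w = (let
     Sent = (\<lambda>u. FEq (Fn (c_sent C) [u]) (num 1));
     CT = (\<lambda>u. FEq (Fn (c_clterm C) [u]) (num 1));
     F1 = (\<lambda>u. FEq (Fn (c_fml1 C) [u]) (num 1));
     ng = (\<lambda>u. Fn (c_neg C) [u]);
     Tc = (\<lambda>u. Fn (c_T C) [u]);
     Pc = (\<lambda>u. Fn (c_P C) [u]);
     cj = (\<lambda>u v. Fn (c_conj C) [u, v]);
     dj = (\<lambda>u v. Fn (c_disj C) [u, v]);
     eqc = (\<lambda>u v. Fn (c_eq C) [u, v]);
     neqc = (\<lambda>u v. Fn (c_neq C) [u, v]);
     alc = (\<lambda>u. Fn (c_all C) [u]);
     exc = (\<lambda>u. Fn (c_ex C) [u]);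
     ins = (\<lambda>u v. Fn (c_inst C) [u, v]);
     Pi = (\<lambda>u. FOr (inst1 0 u B) (inst1 0 (ng u) B));
     Vl2 = (\<lambda>u v. substf (V(0 := u, 1 := v)) Vl)
   in
     \<comment> \<open>T1\<close>
     iffs {CT a, CT b} (FEx z (FAnd (Vl2 a (V z)) (Vl2 b (V z)))) (FT (eqc a b))
   \<union> iffs {CT a, CT b}
       (FEx z (FEx w (FAnd (Vl2 a (V z)) (FAnd (Vl2 b (V w)) (FNeq (V z) (V w))))))
       (FT (neqc a b))
     \<comment> \<open>T2\<close>
   \<union> iffs {Sent a} (FP a) (FT (Pc a))
   \<union> iffs {Sent a} (FNP a) (FT (ng (Pc a)))
     \<comment> \<open>T3\<close>
   \<union> iffs {Sent a} (FT a) (FT (Tc a))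
   \<union> iffs {Sent a} (FT (ng a)) (FNT a)
     \<comment> \<open>T4\<close>
   \<union> iffs {Sent a, Sent b} (FAnd (FT a) (FT b)) (FT (cj a b))
   \<union> iffs {Sent a, Sent b} (FOr (FT a) (FT b)) (FT (dj a b))
     \<comment> \<open>T5\<close>
   \<union> iffs {F1 a} (FAll z (FT (ins a (V z)))) (FT (alc a))
   \<union> iffs {F1 a} (FEx z (FT (ins a (V z)))) (FT (exc a))
     \<comment> \<open>P1\<close>
   \<union> {({Sent a, Pi a}, {FP a})}
     \<comment> \<open>P2\<close>
   \<union> iffs {Sent a} (FP (ng (Tc a))) (FP (Tc a))
   \<union> iffs {Sent a} (FP (ng (Pc a))) (FP (Pc a))
     \<comment> \<open>P3\<close>
   \<union> iffs {Sent a} (FP (Tc a)) (FOr (FP a) (Pi (Tc a)))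
     \<comment> \<open>P4\<close>
   \<union> iffs {Sent a, Sent b} (FP (cj a b))
       (FOr (FAnd (FP a) (FP b)) (FOr (FAnd (FT a) (FP b))
          (FOr (FAnd (FT b) (FP a)) (Pi (cj a b)))))
     \<comment> \<open>P5\<close>
   \<union> iffs {Sent a, Sent b} (FP (dj a b))
       (FOr (FAnd (FP a) (FP b)) (FOr (FAnd (FNT a) (FP b))
          (FOr (FAnd (FNT b) (FP a)) (Pi (dj a b)))))
     \<comment> \<open>P6\<close>
   \<union> iffs {F1 a} (FP (alc a))
       (FOr (FAnd (FEx z (FP (ins a (V z))))
                  (FAll z (FOr (FP (ins a (V z))) (FT (ins a (V z))))))
            (Pi (alc a)))
     \<comment> \<open>P7\<close>
   \<union> iffs {F1 a} (FP (exc a))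
       (FOr (FAnd (FEx z (FP (ins a (V z))))
                  (FAll z (FOr (FP (ins a (V z))) (FNT (ins a (V z))))))
            (Pi (exc a)))
     \<comment> \<open>I1\<close>
   \<union> {({Sent a, FT (dj a (ng a))}, {FNP a})})"

definition TPax :: "coding \<Rightarrow> fml \<Rightarrow> fml \<Rightarrow> (fml set \<times> fml set) set" where
  "TPax C Vl B = (\<Union> {tp_inst C Vl B a b z w | a b z w.
       z \<noteq> w \<and> z \<notin> fvt a \<union> fvt b \<and> w \<notin> fvt a \<union> fvt b})"

abbreviation TP :: "coding \<Rightarrow> fml \<Rightarrow> fml \<Rightarrow> fml set \<Rightarrow> fml set \<Rightarrow> bool" where
  "TP C Vl B \<equiv> deriv (PAax \<union> TPax C Vl B)"

end

theory Submission
  imports Defs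
begin


lemma map_inj_IH: "(\<And>x y. x \<in> set xs \<Longrightarrow> f x = f y \<Longrightarrow> x = y) \<Longrightarrow> map f xs = map f ys \<Longrightarrow> xs = ys"
proof (induction xs arbitrary: ys)
  case Nil then show ?case by simp
next
  case (Cons a xs) then show ?case by (cases ys) auto
qed

lemma code_pfun_inj: "code_pfun f = code_pfun g \<Longrightarrow> f = g"
proof (induction f arbitrary: g)
  case (PComp f gs)
  then show ?case by (cases g) (auto simp: list_encode_eq intro: map_inj_IH)
next
  case (PRec f1 f2)
  then show ?case by (cases g) auto
qed (case_tac g; auto)+

lemma code_trm_inj: "code_trm s = code_trm t \<Longrightarrow> s = t"
proof (induction s arbitrary: t)
  case (V n) then show ?case by (cases t) auto
next
  case (Fn f ts)
  then show ?case by (cases t) (auto simp: list_encode_eq intro: map_inj_IH code_pfun_inj)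
qed

lemma code_fml_inj: "code_fml a = code_fml b \<Longrightarrow> a = b"
  by (induction a arbitrary: b; case_tac b; auto dest: code_trm_inj)

lemma inj_code_fml: "inj code_fml"
  by (meson code_fml_inj injI)

lemma dec_code[simp]: "dec_f (code_fml a) = a"
  by (simp add: dec_f_def inj_code_fml)

lemma is_fcode_code[simp]: "is_fcode (code_fml a)"
  by (simp add: is_fcode_def)

lemma code_dec: "is_fcode n \<Longrightarrow> code_fml (dec_f n) = n"
  by (auto simp: is_fcode_def)

lemma fv_neg[simp]: "fv (neg a) = fv a"
  by (induction a) auto

lemma fvt_num[simp]: "fvt (num n) = {}"
  by (induction n) (auto simp: zero_def succ_def)

lemma evalt_num[simp]: "evalt e (num n) = n"
  by (induction n) (auto simp: zero_def succ_def)

lemma fvt_quote[simp]: "fvt (quote a) = {}"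
  by (simp add: quote_def)

lemma evalt_quote[simp]: "evalt e (quote a) = code_fml a"
  by (simp add: quote_def)

lemma deriv_finite: "deriv Ax G D \<Longrightarrow> finite G \<and> finite D"
  by (induction rule: deriv.induct) auto

lemma cut_closed: "deriv Ax (insert a G) D \<Longrightarrow> deriv Ax {} {a} \<Longrightarrow> deriv Ax G D"
proof -
  assume 1: "deriv Ax (insert a G) D" and 2: "deriv Ax {} {a}"
  from deriv_finite[OF 1] have f: "finite G" "finite D" by auto
  have "deriv Ax G (insert a D)" by (rule deriv.weak[OF 2]) (use f in auto)
  then show ?thesis using 1 by (rule deriv.cut)
qed

lemma cutw: "deriv Ax G1 {a} \<Longrightarrow> deriv Ax (insert a G2) D \<Longrightarrow> G1 \<subseteq> G2 \<Longrightarrow> deriv Ax G2 D"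
proof -
  assume 1: "deriv Ax G1 {a}" and 2: "deriv Ax (insert a G2) D" and s: "G1 \<subseteq> G2"
  from deriv_finite[OF 2] have f: "finite G2" "finite D" by auto
  have "deriv Ax G2 (insert a D)" by (rule deriv.weak[OF 1]) (use f s in auto)
  then show ?thesis using 2 by (rule deriv.cut)
qed

lemma rrepl: "deriv Ax G (insert (inst1 x u A) D) \<Longrightarrow> deriv Ax {} {FEq s u}
   \<Longrightarrow> deriv Ax G (insert (inst1 x s A) D)"
proof -
  assume 1: "deriv Ax G (insert (inst1 x u A) D)" and 2: "deriv Ax {} {FEq s u}"
  have "deriv Ax G (insert (FNeq s u) (insert (inst1 x s A) D))" using 1 by (rule deriv.repl)
  then have "deriv Ax (insert (neg (FNeq s u)) G) (insert (inst1 x s A) D)" by (rule deriv.negL)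
  then have "deriv Ax (insert (FEq s u) G) (insert (inst1 x s A) D)" by simp
  then show ?thesis using 2 by (rule cut_closed)
qed

lemma substt_id: "x \<notin> fvt u \<Longrightarrow> substt (V(x := s)) u = u"
  by (induction u) (auto intro: map_idI)

lemma inst_FEq: "inst1 x s (FEq u v) = FEq (substt (V(x := s)) u) (substt (V(x := s)) v)"
  by (simp add: inst1_def)

lemma inst_FT: "inst1 x s (FT (V x)) = FT s"
  by (simp add: inst1_def)

lemma drefl: "deriv Ax {} {FEq t t}"
  using deriv.refl[of "{}" "{}" Ax t] by simp

lemma dsym: "fvt s = {} \<Longrightarrow> fvt t = {} \<Longrightarrow> deriv Ax {} {FEq s t} \<Longrightarrow> deriv Ax {} {FEq t s}"
proof -
  assume c: "fvt s = {}" "fvt t = {}" and 1: "deriv Ax {} {FEq s t}"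
  have "deriv Ax {} (insert (inst1 0 t (FEq t (V 0))) {})"
    using drefl[of Ax t] by (simp add: inst_FEq substt_id c)
  from rrepl[OF this 1] show ?thesis by (simp add: inst_FEq substt_id c)
qed

lemma dtrans: "fvt s = {} \<Longrightarrow> fvt t = {} \<Longrightarrow> fvt u = {} \<Longrightarrow> deriv Ax {} {FEq s t} \<Longrightarrow> deriv Ax {} {FEq t u}
   \<Longrightarrow> deriv Ax {} {FEq s u}"
proof -
  assume c: "fvt s = {}" "fvt t = {}" "fvt u = {}" and 1: "deriv Ax {} {FEq s t}" and 2: "deriv Ax {} {FEq t u}"
  have "deriv Ax {} (insert (inst1 0 t (FEq (V 0) u)) {})"
    using 2 by (simp add: inst_FEq substt_id c)
  from rrepl[OF this 1] show ?thesis by (simp add: inst_FEq substt_id c)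
qed

lemma cong_list:
  "list_all2 (\<lambda>a b. deriv Ax {} {FEq a b} \<and> fvt a = {} \<and> fvt b = {}) ts us \<Longrightarrow> fvt (Fn f pre) = {}
   \<Longrightarrow> deriv Ax {} {FEq (Fn f (pre @ ts)) (Fn f (pre @ us))}"
proof (induction ts arbitrary: pre us)
  case Nil then show ?case by (simp add: drefl)
next
  case (Cons a ts)
  then obtain b us' where us: "us = b # us'" and ab: "deriv Ax {} {FEq a b}" "fvt a = {}" "fvt b = {}"
    and r: "list_all2 (\<lambda>a b. deriv Ax {} {FEq a b} \<and> fvt a = {} \<and> fvt b = {}) ts us'"
    by (cases us) auto
  have cts: "fvt t = {}" if "t \<in> set ts" for t using r that
    by (metis (mono_tags, lifting) in_set_conv_nth list_all2_conv_all_nth)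
  have cus: "fvt t = {}" if "t \<in> set us'" for t using r that
    by (metis (mono_tags, lifting) in_set_conv_nth list_all2_conv_all_nth)
  have cpre: "fvt t = {}" if "t \<in> set pre" for t using Cons.prems(2) that by auto
  have sp: "map (substt (V(0 := x))) pre = pre" for x
    by (rule map_idI) (simp add: substt_id cpre)
  have sts: "map (substt (V(0 := x))) ts = ts" for x
    by (rule map_idI) (simp add: substt_id cts)
  have e1: "inst1 0 x (FEq (Fn f (pre @ a # ts)) (Fn f (pre @ V 0 # ts))) = FEq (Fn f (pre @ a # ts)) (Fn f (pre @ x # ts))" for x
    by (simp add: inst_FEq sp sts substt_id ab cts cpre)
  have "deriv Ax {} (insert (inst1 0 a (FEq (Fn f (pre @ a # ts)) (Fn f (pre @ V 0 # ts)))) {})"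
    unfolding e1 by (simp add: drefl)
  from rrepl[OF this dsym[OF ab(2,3,1)]]
  have s1: "deriv Ax {} {FEq (Fn f (pre @ a # ts)) (Fn f (pre @ b # ts))}" unfolding e1 by simp
  have s2: "deriv Ax {} {FEq (Fn f ((pre @ [b]) @ ts)) (Fn f ((pre @ [b]) @ us'))}"
    by (rule Cons.IH[OF r]) (use Cons.prems(2) ab in auto)
  show ?case unfolding us
    by (rule dtrans[OF _ _ _ s1]) (use s2 Cons.prems(2) ab cts cus in auto)
qed



lemma pa_ax: "({}, {FEq s t}) \<in> PAax \<Longrightarrow> PAax \<subseteq> Ax \<Longrightarrow> deriv Ax {} {FEq s t}"
  by (rule deriv.ax) auto

lemma fvt_map_num[simp]: "fvt (Fn f (map num vs)) = {}"
  by simp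

lemma eval_pfun_d: "PAax \<subseteq> Ax \<Longrightarrow> deriv Ax {} {FEq (Fn f (map num vs)) (num (eval_pfun f vs))}"
proof (induction f arbitrary: vs)
  case PZ
  show ?case by (rule pa_ax[OF _ PZ]) (auto simp: PAax_def)
next
  case PS
  show ?case
  proof (cases vs)
    case Nil then show ?thesis by (intro pa_ax[OF _ PS]) (auto simp: PAax_def)
  next
    case (Cons v rest)
    show ?thesis
    proof (cases rest)
      case Nil then show ?thesis using Cons by (simp add: succ_def drefl)
    next
      case (Cons u rest')
      then show ?thesis using \<open>vs = v # rest\<close>
        by (intro pa_ax[OF _ PS]) (auto simp: PAax_def)
    qed
  qed
next
  case (PProj i)
  have "({}, {FEq (Fn (PProj i) (map num vs)) (if i < length (map num vs) then (map num vs) ! i else zero)}) \<in> PAax"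
    by (auto simp: PAax_def)
  then have "({}, {FEq (Fn (PProj i) (map num vs)) (num (eval_pfun (PProj i) vs))}) \<in> PAax"
    by (auto simp: zero_def split: if_splits)
  then show ?case by (rule pa_ax[OF _ PProj])
next
  case (PComp f gs)
  let ?ts = "map num vs"
  have a: "deriv Ax {} {FEq (Fn (PComp f gs) ?ts) (Fn f (map (\<lambda>g. Fn g ?ts) gs))}"
    by (rule pa_ax[OF _ PComp.prems]) (auto simp: PAax_def)
  have b: "deriv Ax {} {FEq (Fn f ([] @ map (\<lambda>g. Fn g ?ts) gs)) (Fn f ([] @ map num (map (\<lambda>g. eval_pfun g vs) gs)))}"
    by (rule cong_list) (auto simp: list_all2_conv_all_nth intro!: PComp.IH(2)[OF _ PComp.prems])
  have c: "deriv Ax {} {FEq (Fn f (map num (map (\<lambda>g. eval_pfun g vs) gs))) (num (eval_pfun f (map (\<lambda>g. eval_pfun g vs) gs)))}"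
    by (rule PComp.IH(1)[OF PComp.prems])
  have d: "deriv Ax {} {FEq (Fn (PComp f gs) ?ts) (Fn f (map num (map (\<lambda>g. eval_pfun g vs) gs)))}"
    by (rule dtrans[OF _ _ _ a]) (use b in auto)
  show ?case by (rule dtrans[OF _ _ _ d]) (use c in auto)
next
  case (PRec f g)
  show ?case
  proof (cases vs)
    case Nil
    have a: "deriv Ax {} {FEq (Fn (PRec f g) []) (Fn f [])}"
      by (rule pa_ax[OF _ PRec.prems]) (auto simp: PAax_def)
    have b: "deriv Ax {} {FEq (Fn f []) (num (eval_pfun f []))}"
      using PRec.IH(1)[OF PRec.prems, of "[]"] by simp
    show ?thesis using dtrans[OF _ _ _ a b] Nil by simp
  next
    case (Cons y ys)
    have "deriv Ax {} {FEq (Fn (PRec f g) (map num (y # ys))) (num (eval_pfun (PRec f g) (y # ys)))}"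
    proof (induction y)
      case 0
      have a: "deriv Ax {} {FEq (Fn (PRec f g) (zero # map num ys)) (Fn f (map num ys))}"
        by (rule pa_ax[OF _ PRec.prems]) (auto simp: PAax_def)
      show ?case using dtrans[OF _ _ _ a PRec.IH(1)[OF PRec.prems, of ys]] by (simp add: zero_def)
    next
      case (Suc k)
      let ?r = "eval_pfun (PRec f g) (k # ys)"
      have a: "deriv Ax {} {FEq (Fn (PRec f g) (succ (num k) # map num ys))
                 (Fn g (Fn (PRec f g) (num k # map num ys) # num k # map num ys))}"
        by (rule pa_ax[OF _ PRec.prems]) (auto simp: PAax_def)
      have b: "deriv Ax {} {FEq (Fn g ([] @ Fn (PRec f g) (num k # map num ys) # num k # map num ys))
                 (Fn g ([] @ num ?r # num k # map num ys))}"
        by (rule cong_list) (use Suc in \<open>auto simp: list_all2_conv_all_nth nth_Cons' drefl\<close>)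
      have c: "deriv Ax {} {FEq (Fn g (map num (?r # k # ys))) (num (eval_pfun g (?r # k # ys)))}"
        by (rule PRec.IH(2)[OF PRec.prems])
      have d: "deriv Ax {} {FEq (Fn (PRec f g) (succ (num k) # map num ys)) (Fn g (map num (?r # k # ys)))}"
        by (rule dtrans[OF _ _ _ a]) (use b in \<open>auto simp: succ_def\<close>)
      show ?case using dtrans[OF _ _ _ d c] by (simp add: succ_def)
    qed
    then show ?thesis using Cons by simp
  qed
qed

lemma eval_trm_d: "PAax \<subseteq> Ax \<Longrightarrow> fvt t = {} \<Longrightarrow> deriv Ax {} {FEq t (num (evalt e t))}"
proof (induction t)
  case (V n) then show ?case by simp
next
  case (Fn f ts)
  have b: "deriv Ax {} {FEq (Fn f ([] @ ts)) (Fn f ([] @ map num (map (evalt e) ts)))}"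
    by (rule cong_list) (use Fn in \<open>auto simp: list_all2_conv_all_nth\<close>)
  have c: "deriv Ax {} {FEq (Fn f (map num (map (evalt e) ts))) (num (eval_pfun f (map (evalt e) ts)))}"
    by (rule eval_pfun_d[OF Fn.prems(1)])
  show ?case using dtrans[OF _ _ _ _ c] b Fn.prems(2) by simp
qed

lemma eq_closed_d: "PAax \<subseteq> Ax \<Longrightarrow> fvt s = {} \<Longrightarrow> fvt t = {} \<Longrightarrow> evalt e s = evalt e t
   \<Longrightarrow> deriv Ax {} {FEq s t}"
proof -
  assume a: "PAax \<subseteq> Ax" "fvt s = {}" "fvt t = {}" "evalt e s = evalt e t"
  have 1: "deriv Ax {} {FEq s (num (evalt e s))}" by (rule eval_trm_d) (use a in auto)
  have 2: "deriv Ax {} {FEq (num (evalt e s)) t}"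
    by (rule dsym) (use a eval_trm_d[of Ax t e] in auto)
  show ?thesis by (rule dtrans[OF _ _ _ 1 2]) (use a in auto)
qed



abbreviation Snt :: "coding \<Rightarrow> trm \<Rightarrow> fml" where
  "Snt C u \<equiv> FEq (Fn (c_sent C) [u]) (num 1)"

lemma tp_sub: "fvt a = {} \<Longrightarrow> fvt b = {} \<Longrightarrow> x \<in> tp_inst C Vl B a b 0 1 \<Longrightarrow> x \<in> TPax C Vl B"
  unfolding TPax_def
  apply (rule UnionI[where X = "tp_inst C Vl B a b 0 1"])
   apply (rule CollectI)
   apply (rule exI[where x = a], rule exI[where x = b], rule exI[where x = 0], rule exI[where x = 1])
   apply simp
  apply assumption
  done

lemma tp_d: "(G, D) \<in> tp_inst C Vl B a b 0 1 \<Longrightarrow> fvt a = {} \<Longrightarrow> fvt b = {} \<Longrightarrow> finite G \<Longrightarrow> finite D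
   \<Longrightarrow> TP C Vl B G D"
  apply (rule deriv.ax)
    apply (rule UnI2)
    apply (erule tp_sub, assumption, assumption)
   apply assumption+
  done

lemma mem_I1: "({Snt C a, FT (Fn (c_disj C) [a, Fn (c_neg C) [a]])}, {FNP a}) \<in> tp_inst C Vl B a b z w"
  unfolding tp_inst_def Let_def iffs_def
  apply (rule UnI2)
  by (rule singletonI)


lemma mem_T2a: "({FP a, Snt C a}, {FT (Fn (c_P C) [a])}) \<in> tp_inst C Vl B a b z w"
  unfolding tp_inst_def Let_def iffs_def
  apply (rule UnI1)
  apply (rule UnI1)
  apply (rule UnI1)
  apply (rule UnI1)
  apply (rule UnI1)
  apply (rule UnI1)
  apply (rule UnI1)
  apply (rule UnI1)
  apply (rule UnI1)
  apply (rule UnI1)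
  apply (rule UnI1)
  apply (rule UnI1)
  apply (rule UnI1)
  apply (rule UnI1)
  apply (rule UnI1)
  apply (rule UnI1)
  apply (rule UnI2)
  by (rule insertI1)


lemma mem_T2b: "({FNP a, Snt C a}, {FT (Fn (c_neg C) [Fn (c_P C) [a]])}) \<in> tp_inst C Vl B a b z w"
  unfolding tp_inst_def Let_def iffs_def
  apply (rule UnI1)
  apply (rule UnI1)
  apply (rule UnI1)
  apply (rule UnI1)
  apply (rule UnI1)
  apply (rule UnI1)
  apply (rule UnI1)
  apply (rule UnI1)
  apply (rule UnI1)
  apply (rule UnI1)
  apply (rule UnI1)
  apply (rule UnI1)
  apply (rule UnI1)
  apply (rule UnI1)
  apply (rule UnI1)
  apply (rule UnI2)
  by (rule insertI1)


lemma mem_T4b: "({FOr (FT a) (FT b), Snt C a, Snt C b}, {FT (Fn (c_disj C) [a, b])}) \<in> tp_inst C Vl B a b z w"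
  unfolding tp_inst_def Let_def iffs_def
  apply (rule UnI1)
  apply (rule UnI1)
  apply (rule UnI1)
  apply (rule UnI1)
  apply (rule UnI1)
  apply (rule UnI1)
  apply (rule UnI1)
  apply (rule UnI1)
  apply (rule UnI1)
  apply (rule UnI1)
  apply (rule UnI1)
  apply (rule UnI2)
  by (rule insertI1)


lemma PA_TP: "PAax \<subseteq> PAax \<union> TPax C Vl B" by blast

lemma sent_d: "good_coding C \<Longrightarrow> sentence \<psi> \<Longrightarrow> fvt u = {} \<Longrightarrow> evalt (\<lambda>_. 0) u = code_fml \<psi>
   \<Longrightarrow> TP C Vl B {} {Snt C u}"
  by (rule eq_closed_d[OF PA_TP, where e = "\<lambda>_. 0"]) (auto simp: good_coding_def sentF_def zero_def succ_def)

lemma K1: "good_coding C \<Longrightarrow> sentence \<psi> \<Longrightarrow> fvt q = {} \<Longrightarrow> evalt (\<lambda>_. 0) q = code_fml \<psi>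
   \<Longrightarrow> TP C Vl B {FT (Fn (c_disj C) [q, Fn (c_neg C) [q]])} {FNP q}"
proof -
  assume a: "good_coding C" "sentence \<psi>" "fvt q = {}" "evalt (\<lambda>_. 0) q = code_fml \<psi>"
  have "TP C Vl B {Snt C q, FT (Fn (c_disj C) [q, Fn (c_neg C) [q]])} {FNP q}"
    by (rule tp_d[OF mem_I1, where b = q]) (use a in auto)
  then have "TP C Vl B (insert (Snt C q) {FT (Fn (c_disj C) [q, Fn (c_neg C) [q]])}) {FNP q}" by simp
  then show ?thesis by (rule cut_closed) (rule sent_d[OF a])
qed

lemma K2: "good_coding C \<Longrightarrow> sentence \<psi> \<Longrightarrow> fvt q = {} \<Longrightarrow> evalt (\<lambda>_. 0) q = code_fml \<psi>
   \<Longrightarrow> TP C Vl B {FT q} {FNP q}"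
proof -
  assume a: "good_coding C" "sentence \<psi>" "fvt q = {}" "evalt (\<lambda>_. 0) q = code_fml \<psi>"
  let ?n = "Fn (c_neg C) [q]"
  have vn: "evalt (\<lambda>_. 0) ?n = code_fml (neg \<psi>)"
    using a by (simp add: good_coding_def negF_def)
  have sn: "sentence (neg \<psi>)" using a by (simp add: sentence_def)
  have "TP C Vl B {FOr (FT q) (FT ?n), Snt C q, Snt C ?n} {FT (Fn (c_disj C) [q, ?n])}"
    by (rule tp_d[OF mem_T4b]) (use a in auto)
  then have "TP C Vl B (insert (Snt C ?n) (insert (Snt C q) {FOr (FT q) (FT ?n)})) {FT (Fn (c_disj C) [q, ?n])}"
    by (simp add: insert_commute)
  then have "TP C Vl B (insert (Snt C q) {FOr (FT q) (FT ?n)}) {FT (Fn (c_disj C) [q, ?n])}"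
    by (rule cut_closed) (rule sent_d[OF a(1) sn _ vn], use a in simp)
  then have 1: "TP C Vl B {FOr (FT q) (FT ?n)} {FT (Fn (c_disj C) [q, ?n])}"
    by (rule cut_closed) (rule sent_d[OF a])
  have 0: "TP C Vl B {FT q} {FOr (FT q) (FT ?n)}"
    using deriv.orR1[where b = "FT ?n" and D = "{}", OF deriv.init[of "PAax \<union> TPax C Vl B" "FT q"]] by simp
  have 2: "TP C Vl B {FT q} {FT (Fn (c_disj C) [q, ?n])}"
    by (rule cutw[OF 0]) (use 1 in \<open>auto intro: deriv.weak\<close>)
  show ?thesis by (rule cutw[OF 2]) (use K1[OF a] in \<open>auto intro: deriv.weak\<close>)
qed



lemma rreplT: "TP C Vl B G {FT u} \<Longrightarrow> fvt u = {} \<Longrightarrow> fvt s = {} \<Longrightarrow> evalt (\<lambda>_. 0) s = evalt (\<lambda>_. 0) u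
  \<Longrightarrow> TP C Vl B G {FT s}"
proof -
  assume a: "TP C Vl B G {FT u}" "fvt u = {}" "fvt s = {}" "evalt (\<lambda>_. 0) s = evalt (\<lambda>_. 0) u"
  have 1: "TP C Vl B G (insert (inst1 0 u (FT (V 0))) {})" using a by (simp add: inst_FT)
  have 2: "TP C Vl B {} {FEq s u}" by (rule eq_closed_d[OF PA_TP, where e = "\<lambda>_. 0"]) (use a in auto)
  from rrepl[OF 1 2] show ?thesis by (simp add: inst_FT)
qed

lemma step2: "TP C Vl B {X} {FT u} \<Longrightarrow> good_coding C \<Longrightarrow> sentence \<psi> \<Longrightarrow> fvt u = {}
   \<Longrightarrow> evalt (\<lambda>_. 0) u = code_fml \<psi> \<Longrightarrow> TP C Vl B {X} {FNP (quote \<psi>)}"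
proof -
  assume a: "TP C Vl B {X} {FT u}" "good_coding C" "sentence \<psi>" "fvt u = {}" "evalt (\<lambda>_. 0) u = code_fml \<psi>"
  have 1: "TP C Vl B {X} {FT (quote \<psi>)}" by (rule rreplT[OF a(1)]) (use a in auto)
  have 2: "TP C Vl B {FT (quote \<psi>)} {FNP (quote \<psi>)}" by (rule K2[OF a(2,3)]) auto
  show ?thesis by (rule cutw[OF 1]) (use 2 in \<open>auto intro: deriv.weak\<close>)
qed

lemma negF_code[simp]: "negF (code_fml a) = code_fml (neg a)"
  by (simp add: negF_def del: code_fml.simps)

theorem mainTheorem11:
  fixes C :: coding and Vl B :: fml
  assumes "good_coding C" and "defines_val Vl" and "defines_BP B"
  shows "(\<forall>\<phi> \<Gamma> \<Delta>. sentence \<phi> \<and> finite \<Gamma> \<and> finite \<Delta> \<and> (\<forall>\<chi>\<in>\<Gamma> \<union> \<Delta>. sentence \<chi>)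
            \<and> TP C Vl B \<Gamma> (insert (FP (quote \<phi>)) \<Delta>)
          \<longrightarrow> TP C Vl B (insert (FT (quote (FOr \<phi> (neg \<phi>)))) \<Gamma>) \<Delta>)
       \<and> (\<forall>t. fvt t = {} \<and> is_fcode (evalt (\<lambda>_. 0) t) \<and> sentence (dec_f (evalt (\<lambda>_. 0) t))
          \<longrightarrow> TP C Vl B {FP t} {FNP (quote (FP (num (evalt (\<lambda>_. 0) t))))}
            \<and> TP C Vl B {FNP t} {FNP (quote (neg (FP (num (evalt (\<lambda>_. 0) t)))))})"
proof (intro conjI allI impI)
  fix \<phi> \<Gamma> \<Delta>
  assume h: "sentence \<phi> \<and> finite \<Gamma> \<and> finite \<Delta> \<and> (\<forall>\<chi>\<in>\<Gamma> \<union> \<Delta>. sentence \<chi>)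
            \<and> TP C Vl B \<Gamma> (insert (FP (quote \<phi>)) \<Delta>)"
  let ?q = "quote \<phi>"
  let ?r = "quote (FOr \<phi> (neg \<phi>))"
  let ?d = "Fn (c_disj C) [?q, Fn (c_neg C) [?q]]"
  have h1: "TP C Vl B {FT ?r} {FT ?d}"
    by (rule rreplT[OF deriv.init]) (use assms(1) in \<open>auto simp: good_coding_def negF_def disjF_def\<close>)
  have h2: "TP C Vl B {FT ?d} {FNP ?q}" by (rule K1[OF assms(1)]) (use h in auto)
  have h3: "TP C Vl B {FT ?r} {FNP ?q}" by (rule cutw[OF h1]) (use h2 in \<open>auto intro: deriv.weak\<close>)
  have h4: "TP C Vl B (insert (neg (FP ?q)) \<Gamma>) \<Delta>" using h by (intro deriv.negL) auto
  have h5: "TP C Vl B (insert (FNP ?q) (insert (FT ?r) \<Gamma>)) \<Delta>"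
    by (rule deriv.weak[OF h4]) (use h in auto)
  show "TP C Vl B (insert (FT ?r) \<Gamma>) \<Delta>" by (rule cutw[OF h3 h5]) auto
next
  fix t
  assume h: "fvt t = {} \<and> is_fcode (evalt (\<lambda>_. 0) t) \<and> sentence (dec_f (evalt (\<lambda>_. 0) t))"
  let ?n = "evalt (\<lambda>_. 0) t"
  have cd: "code_fml (dec_f ?n) = ?n" using h by (simp add: code_dec)
  have st: "TP C Vl B {} {Snt C t}"
    by (rule sent_d[OF assms(1), where \<psi> = "dec_f ?n"]) (use h cd in auto)
  have sn: "sentence (FP (num ?n))" "sentence (neg (FP (num ?n)))" by (auto simp: sentence_def)
  have a1: "TP C Vl B {FP t, Snt C t} {FT (Fn (c_P C) [t])}"
    by (rule tp_d[OF mem_T2a, where b = t]) (use h in auto)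
  then have "TP C Vl B (insert (Snt C t) {FP t}) {FT (Fn (c_P C) [t])}" by (simp add: insert_commute)
  then have a2: "TP C Vl B {FP t} {FT (Fn (c_P C) [t])}" using st by (rule cut_closed)
  show "TP C Vl B {FP t} {FNP (quote (FP (num ?n)))}"
    by (rule step2[OF a2 assms(1) sn(1)]) (use h assms(1) in \<open>auto simp: good_coding_def PF_def\<close>)
  have b1: "TP C Vl B {FNP t, Snt C t} {FT (Fn (c_neg C) [Fn (c_P C) [t]])}"
    by (rule tp_d[OF mem_T2b, where b = t]) (use h in auto)
  then have "TP C Vl B (insert (Snt C t) {FNP t}) {FT (Fn (c_neg C) [Fn (c_P C) [t]])}" by (simp add: insert_commute)
  then have b2: "TP C Vl B {FNP t} {FT (Fn (c_neg C) [Fn (c_P C) [t]])}" using st by (rule cut_closed)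
  show "TP C Vl B {FNP t} {FNP (quote (neg (FP (num ?n))))}"
    by (rule step2[OF b2 assms(1) sn(2)]) (use h assms(1) in \<open>auto simp: good_coding_def PF_def simp del: code_fml.simps\<close>)
qed

end
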